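(* Let $(M,d)$ be a complete pointed metric space and let $A\subset\mathcal{R}(M)$ be Borel. Then $\mathcal{R}\setminus\Delta(A)\in\mathfrak{C}$; that is, whenever $\mu,\nu$ are positive Radon measures on $\beta\widetilde{M}$ with $\mu\preccurlyeq\nu$ and $\nu$ concentrated on $\mathcal{R}\setminus\Delta(A)$, $\mu$ is also concentrated on $\mathcal{R}\setminus\Delta(A)$.
   Context: $\widetilde{M}=\{(x,y)\in M\times M:x\ne y\}$, $\beta\widetilde{M}$ its Stone–Čech compactification; Radon measures identified with $C(\beta\widetilde{M})^*$. $d:\beta\widetilde{M}\to[0,\infty]$ continuously extends the metric on $\widetilde{M}$. $M^u$ is the uniform (Samuel) compactification of $M$; $p_1,p_2:\beta\widetilde{M}\to M^u$ continuously extend the coordinate projections, $p=(p_1,p_2)$. $\mathcal{R}(M)=\{\xi\in M^u:\overline{d_0}(\xi)<\infty\}$ (subspace topology), where $\overline{d_0}:M^u\to[0,\infty]$ continuously extends $x\mapsto d(x,0)$ ($0$ the base point), and $\mathcal{R}=p^{-1}(\mathcal{R}(M)\times\mathcal{R}(M))$. $\Delta(A)=d^{-1}(0)\cap p^{-1}(A\times A)$. $G$ is the set of $g\in C(\beta\widetilde{M})$ with $d(x,y)g(x,y)\le d(x,u)g(x,u)+d(u,y)g(u,y)$ for all distinct $x,u,y\in M$; $\mu\preccurlyeq\nu$ iff $\int g\,d\mu\le\int g\,d\nu$ for all $g\in G$. $\mathfrak{C}$ is the family of Borel sets $C\subset\beta\widetilde{M}$ with the stated preservation property. Throughout, $M$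 has at least three distinct points. *)

theory Defs
  imports "HOL-Analysis.Analysis"
begin

definition offdiag :: "('a \<times> 'a) set" where
  "offdiag = {(x, y). x \<noteq> y}"

text \<open>(K, e) is a Stone--Cech compactification of the space offdiag (subspace
  topology of M x M): K is compact Hausdorff (the Hausdorff property is the type
  class t2_space), e is a homeomorphism of offdiag onto a dense subset of K, and
  every bounded continuous real function on offdiag extends continuously to K.\<close>
definition stone_cech_offdiag ::
  "(('a::metric_space \<times> 'a) \<Rightarrow> 'k::t2_space) \<Rightarrow> bool" where
  "stone_cech_offdiag e \<longleftrightarrow>
     compact (UNIV :: 'k set) \<and>
     (\<exists>e'. homeomorphism offdiag (e ` offdiag) e e') \<and>
     closure (e ` offdiag) = UNIV \<and>
     (\<forall>f :: 'a \<times> 'a \<Rightarrow> real. continuous_on offdiag f \<and> bounded (f ` offdiag) \<longrightarrow>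
        (\<exists>F :: 'k \<Rightarrow> real. continuous_on UNIV F \<and> (\<forall>z\<in>offdiag. F (e z) = f z)))"

definition samuel_compactification :: "('a::metric_space \<Rightarrow> 'l::t2_space) \<Rightarrow> bool" where
  "samuel_compactification j \<longleftrightarrow>
     compact (UNIV :: 'l set) \<and>
     (\<exists>j'. homeomorphism UNIV (range j) j j') \<and>
     closure (range j) = UNIV \<and>
     (\<forall>f :: 'a \<Rightarrow> real. uniformly_continuous_on UNIV f \<and> bounded (range f) \<longrightarrow>
        (\<exists>F :: 'l \<Rightarrow> real. continuous_on UNIV F \<and> (\<forall>x. F (j x) = f x))) \<and>
     (\<forall>F :: 'l \<Rightarrow> real. continuous_on UNIV F \<longrightarrow> uniformly_continuous_on UNIV (F \<circ> j))"

definition radon_measure :: "'k::topological_space measure \<Rightarrow> bool" where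
  "radon_measure \<mu> \<longleftrightarrow>
     sets \<mu> = sets borel \<and> finite_measure \<mu> \<and>
     (\<forall>B \<in> sets borel. emeasure \<mu> B = (SUP C \<in> {C. compact C \<and> C \<subseteq> B}. emeasure \<mu> C))"

definition concentrated_on :: "'k measure \<Rightarrow> 'k set \<Rightarrow> bool" where
  "concentrated_on \<mu> S \<longleftrightarrow> (\<exists>N \<in> sets \<mu>. emeasure \<mu> N = 0 \<and> space \<mu> - S \<subseteq> N)"

definition Gset :: "(('a::metric_space \<times> 'a) \<Rightarrow> 'k::topological_space) \<Rightarrow> ('k \<Rightarrow> real) set" where
  "Gset e = {g. continuous_on UNIV g \<and>
     (\<forall>x u y. x \<noteq> u \<and> u \<noteq> y \<and> x \<noteq> y \<longrightarrow>
        dist x y * g (e (x, y)) \<le> dist x u * g (e (x, u)) + dist u y * g (e (u, y)))}"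

definition meas_preceq ::
  "(('a::metric_space \<times> 'a) \<Rightarrow> 'k::topological_space) \<Rightarrow> 'k measure \<Rightarrow> 'k measure \<Rightarrow> bool" where
  "meas_preceq e \<mu> \<nu> \<longleftrightarrow> (\<forall>g \<in> Gset e. integral\<^sup>L \<mu> g \<le> integral\<^sup>L \<nu> g)"

end

theory Submission
  imports Defs
begin

lemma ury:
  fixes S T :: "'k::t2_space set"
  assumes cpt: "compact (UNIV::'k set)" and "closed S" "closed T" "S \<inter> T = {}"
  obtains f :: "'k \<Rightarrow> real" where "continuous_on UNIV f" "\<forall>x\<in>S. f x = 1" "\<forall>x\<in>T. f x = 0"
    "\<forall>x. 0 \<le> f x \<and> f x \<le> 1"
proof -
  have H: "Hausdorff_space (euclidean::'k topology)"
    unfolding Hausdorff_space_def using hausdorff by (fastforce simp: disjnt_def)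
  have C: "compact_space (euclidean::'k topology)"
    using cpt by (simp add: compact_space_def)
  have N: "normal_space (euclidean::'k topology)"
    using compact_Hausdorff_or_regular_imp_normal_space C H by blast
  obtain f where f: "continuous_map euclidean (top_of_set {0..1::real}) f" "f ` T \<subseteq> {0}" "f ` S \<subseteq> {1}"
    using Urysohn_lemma[OF N, of T S 0 1] assms by (auto simp: disjnt_def)
  have "continuous_on UNIV f"
    using f(1) continuous_map_in_subtopology by (metis continuous_map_iff_continuous2 open_UNIV subtopology_UNIV)
  moreover have "\<forall>x. 0 \<le> f x \<and> f x \<le> 1" using f(1) by (auto simp: continuous_map_in_subtopology)
  ultimately show ?thesis by (intro that) (use f in auto)
qed

lemma ury2:
  fixes a b :: "'k::t2_space"
  assumes cpt: "compact (UNIV::'k set)" and "a \<noteq> b"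
  obtains f :: "'k \<Rightarrow> real" where "continuous_on UNIV f" "f a = 1" "f b = 0"
proof -
  have dj: "{a} \<inter> {b} = {}" using assms by auto
  show ?thesis
  proof (rule ury[OF cpt closed_singleton closed_singleton dj])
    fix f :: "'k \<Rightarrow> real" assume "continuous_on UNIV f" "\<forall>x\<in>{a}. f x = 1" "\<forall>x\<in>{b}. f x = 0"
    then show ?thesis using that[of f] by simp
  qed
qed

lemma dense_lem:
  assumes beta: "stone_cech_offdiag e" and "open V" and "\<forall>z\<in>offdiag. e z \<notin> V"
  shows "V = {}"
proof -
  have "closure (e ` offdiag) = UNIV" using beta by (simp add: stone_cech_offdiag_def)
  moreover have "V \<inter> e ` offdiag = {}" using assms(3) by auto
  ultimately show ?thesis using open_Int_closure_eq_empty[OF assms(2), of "e ` offdiag"] by auto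
qed

definition gfun :: "('a::metric_space \<Rightarrow> real) \<Rightarrow> 'a \<times> 'a \<Rightarrow> real" where
  "gfun h z = min 1 ((h (fst z) + h (snd z)) / dist (fst z) (snd z))"

lemma gfun_range:
  assumes "\<forall>x. h x \<ge> 0" "z \<in> offdiag"
  shows "0 \<le> gfun h z \<and> gfun h z \<le> 1"
  using assms by (auto simp: gfun_def offdiag_def intro!: divide_nonneg_pos add_nonneg_nonneg)

lemma tri_real:
  fixes dxy dxu duy hx hu hy :: real
  assumes "dxy \<le> dxu + duy" "hx \<le> hu + dxu" "hy \<le> hu + duy" "hu \<ge> 0"
  shows "min dxy (hx+hy) \<le> min dxu (hx+hu) + min duy (hu+hy)"
  using assms by (auto simp: min_def)

lemma dist_gfun:
  assumes "x \<noteq> y"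
  shows "dist x y * gfun h (x,y) = min (dist x y) (h x + h y)"
proof -
  have "dist x y > 0" using assms by simp
  then show ?thesis
    by (simp add: gfun_def min_mult_distrib_left)
qed

lemma ext_lem:
  fixes e :: "('a::metric_space \<times> 'a) \<Rightarrow> 'k::t2_space"
  assumes beta: "stone_cech_offdiag e"
    and lip: "\<forall>x y. \<bar>h x - h y\<bar> \<le> dist x y" and pos: "\<forall>x. h x \<ge> 0"
  obtains G where "G \<in> Gset e" "\<forall>z\<in>offdiag. G (e z) = gfun h z" "\<forall>\<zeta>. 0 \<le> G \<zeta> \<and> G \<zeta> \<le> 1"
proof -
  have hc: "continuous_on UNIV h"
    by (rule lipschitz_on_continuous_on[of 1]) (use lip in \<open>auto simp: lipschitz_on_def dist_real_def\<close>)
  have c: "continuous_on offdiag (gfun h)"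
    unfolding gfun_def
    by (intro continuous_intros continuous_on_compose2[OF hc]) (auto simp: offdiag_def)
  have b: "bounded (gfun h ` offdiag)"
    by (rule bounded_subset[of "{0..1}"]) (use gfun_range[OF pos] in auto)
  obtain F :: "'k \<Rightarrow> real" where F: "continuous_on UNIV F" "\<forall>z\<in>offdiag. F (e z) = gfun h z"
    using beta c b unfolding stone_cech_offdiag_def by blast
  define G where "G = (\<lambda>\<zeta>. max 0 (min 1 (F \<zeta>)))"
  have Gc: "continuous_on UNIV G" unfolding G_def by (intro continuous_intros F(1))
  have Ge: "\<forall>z\<in>offdiag. G (e z) = gfun h z"
    using F(2) gfun_range[OF pos] by (auto simp: G_def)
  have "G \<in> Gset e"
    unfolding Gset_def
  proof (intro CollectI conjI allI impI Gc)
    fix x u y :: 'a assume d: "x \<noteq> u \<and> u \<noteq> y \<and> x \<noteq> y"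
    have "(x,y) \<in> offdiag" "(x,u) \<in> offdiag" "(u,y) \<in> offdiag" using d by (auto simp: offdiag_def)
    then have "dist x y * G (e (x, y)) = min (dist x y) (h x + h y)"
      "dist x u * G (e (x, u)) = min (dist x u) (h x + h u)"
      "dist u y * G (e (u, y)) = min (dist u y) (h u + h y)"
      using Ge d dist_gfun by auto
    moreover have "min (dist x y) (h x + h y) \<le> min (dist x u) (h x + h u) + min (dist u y) (h u + h y)"
    proof (rule tri_real)
      show "dist x y \<le> dist x u + dist u y" by (rule dist_triangle)
      show "h x \<le> h u + dist x u" using lip[rule_format, of x u] by linarith
      show "h y \<le> h u + dist u y" using lip[rule_format, of y u] by (simp add: dist_commute)
      show "0 \<le> h u" using pos by auto
    qed
    ultimately show "dist x y * G (e (x, y)) \<le> dist x u * G (e (x, u)) + dist u y * G (e (u, y))"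
      by simp
  qed
  moreover have "\<forall>\<zeta>. 0 \<le> G \<zeta> \<and> G \<zeta> \<le> 1" by (auto simp: G_def)
  ultimately show ?thesis using that Ge by blast
qed

lemma radon_space: "radon_measure \<nu> \<Longrightarrow> space \<nu> = UNIV"
  unfolding radon_measure_def by (metis sets_eq_imp_space_eq space_borel)

lemma outer_lem:
  fixes \<nu> :: "'k::t2_space measure"
  assumes nu: "radon_measure \<nu>" and B: "B \<in> sets borel" and z: "measure \<nu> B = 0" and ep: "\<epsilon> > 0"
  obtains U where "open U" "B \<subseteq> U" "measure \<nu> U < \<epsilon>"
proof -
  have fm: "finite_measure \<nu>" and sb: "sets \<nu> = sets borel"
    and reg: "\<forall>B \<in> sets borel. emeasure \<nu> B = (SUP C \<in> {C. compact C \<and> C \<subseteq> B}. emeasure \<nu> C)"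
    using nu by (auto simp: radon_measure_def)
  have sp: "space \<nu> = UNIV" using radon_space[OF nu] .
  show ?thesis
  proof (cases "measure \<nu> UNIV < \<epsilon>")
    case True
    then show ?thesis using that[of UNIV] by auto
  next
    case False
    have Bc: "UNIV - B \<in> sets borel" using B by auto
    have m: "measure \<nu> (UNIV - B) = measure \<nu> UNIV"
      using finite_measure.finite_measure_compl[OF fm, of B] B sb sp z by auto
    have "ennreal (measure \<nu> UNIV - \<epsilon>) < emeasure \<nu> (UNIV - B)"
      using m ep False finite_measure.emeasure_eq_measure[OF fm] by (simp add: ennreal_less_iff)
    then obtain C where C: "compact C" "C \<subseteq> UNIV - B" "ennreal (measure \<nu> UNIV - \<epsilon>) < emeasure \<nu> C"
      using reg Bc by (auto simp: less_SUP_iff)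
    have Cs: "C \<in> sets \<nu>" using C(1) sb by (simp add: borel_closed compact_imp_closed)
    have "measure \<nu> UNIV - \<epsilon> < measure \<nu> C"
      using C(3) finite_measure.emeasure_eq_measure[OF fm] False ep
      by (simp add: ennreal_less_iff)
    moreover have "measure \<nu> (UNIV - C) = measure \<nu> UNIV - measure \<nu> C"
      using finite_measure.finite_measure_compl[OF fm Cs] sp by auto
    ultimately show ?thesis
      using that[of "UNIV - C"] C(1,2) by (auto intro: compact_imp_closed)
  qed
qed

lemma meas_bound:
  fixes \<mu> \<nu> :: "'k::t2_space measure"
  assumes mu: "radon_measure \<mu>" and nu: "radon_measure \<nu>" and prec: "meas_preceq e \<mu> \<nu>"
    and G: "G \<in> Gset e" and X: "X \<in> sets borel" and Y: "Y \<in> sets borel"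
    and lo: "\<forall>\<zeta>. indicator X \<zeta> \<le> G \<zeta>" and hi: "\<forall>\<zeta>. G \<zeta> \<le> indicator Y \<zeta> + c"
  shows "measure \<mu> X \<le> measure \<nu> Y + c * measure \<nu> UNIV"
proof -
  have fm1: "finite_measure \<mu>" and sb1: "sets \<mu> = sets borel" using mu by (auto simp: radon_measure_def)
  have fm2: "finite_measure \<nu>" and sb2: "sets \<nu> = sets borel" using nu by (auto simp: radon_measure_def)
  have sp1: "space \<mu> = UNIV" using radon_space[OF mu] .
  have sp2: "space \<nu> = UNIV" using radon_space[OF nu] .
  have Gc: "continuous_on UNIV G" using G by (simp add: Gset_def)
  have Gm: "G \<in> borel_measurable borel" using borel_measurable_continuous_onI[OF Gc] .
  have Gm1: "G \<in> borel_measurable \<mu>" using Gm measurable_cong_sets[OF sb1 refl] by blast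
  have Gm2: "G \<in> borel_measurable \<nu>" using Gm measurable_cong_sets[OF sb2 refl] by blast
  have bnd: "\<forall>\<zeta>. norm (G \<zeta>) \<le> 1 + \<bar>c\<bar>"
  proof
    fix \<zeta>
    have "0 \<le> G \<zeta>" using lo[rule_format, of \<zeta>] by (metis indicator_pos_le order_trans)
    moreover have "G \<zeta> \<le> 1 + \<bar>c\<bar>" using hi[rule_format, of \<zeta>] indicator_le_1[of Y \<zeta>, where 'a=real] by linarith
    ultimately show "norm (G \<zeta>) \<le> 1 + \<bar>c\<bar>" by simp
  qed
  have i1: "integrable \<mu> G"
    by (rule finite_measure.integrable_const_bound[OF fm1, where B="1+\<bar>c\<bar>"]) (use bnd Gm1 in auto)
  have i2: "integrable \<nu> G"
    by (rule finite_measure.integrable_const_bound[OF fm2, where B="1+\<bar>c\<bar>"]) (use bnd Gm2 in auto)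
  have Xs: "X \<in> sets \<mu>" using X sb1 by simp
  have Ys: "Y \<in> sets \<nu>" using Y sb2 by simp
  have iX: "integrable \<mu> (indicator X :: _ \<Rightarrow> real)"
    using Xs finite_measure.emeasure_finite[OF fm1] by (auto simp: less_top)
  have iY: "integrable \<nu> (indicator Y :: _ \<Rightarrow> real)"
    using Ys finite_measure.emeasure_finite[OF fm2] by (auto simp: less_top)
  have "measure \<mu> X = integral\<^sup>L \<mu> (indicator X)" using sp1 by simp
  also have "\<dots> \<le> integral\<^sup>L \<mu> G" by (rule integral_mono[OF iX i1]) (use lo in auto)
  also have "\<dots> \<le> integral\<^sup>L \<nu> G" using prec G by (auto simp: meas_preceq_def)
  also have "\<dots> \<le> integral\<^sup>L \<nu> (\<lambda>\<zeta>. indicator Y \<zeta> + c)"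
    by (rule integral_mono[OF i2 Bochner_Integration.integrable_add[OF iY finite_measure.integrable_const[OF fm2]]]) (use hi in auto)
  also have "\<dots> = measure \<nu> Y + c * measure \<nu> UNIV"
    using iY sp2 Bochner_Integration.integral_add[OF iY finite_measure.integrable_const[OF fm2, of c]] by (simp add: mult.commute)
  finally show ?thesis .
qed

lemma ov: "continuous_on UNIV f \<Longrightarrow> open S \<Longrightarrow> open (f -` S)"
  using continuous_on_open_vimage[OF open_UNIV, of f] by auto

lemma cv: "continuous_on UNIV f \<Longrightarrow> closed S \<Longrightarrow> closed (f -` S)"
  using continuous_on_closed_vimage[OF closed_UNIV, of f] by auto

lemma unif_eta:
  fixes j :: "'a::metric_space \<Rightarrow> 'l::t2_space"
  assumes unif: "samuel_compactification j" and F: "continuous_on UNIV F" and ep: "(\<epsilon>::real) > 0"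
  obtains \<eta> where "\<eta> > 0" "\<forall>x y. dist x y < \<eta> \<longrightarrow> \<bar>F (j x) - F (j y)\<bar> < \<epsilon>"
proof -
  have "uniformly_continuous_on UNIV (F \<circ> j)" using unif F by (simp add: samuel_compactification_def)
  then obtain \<eta> where "\<eta> > 0" "\<forall>x\<in>UNIV. \<forall>x'\<in>UNIV. dist x' x < \<eta> \<longrightarrow> dist ((F \<circ> j) x') ((F \<circ> j) x) < \<epsilon>"
    using ep unfolding uniformly_continuous_on_def by metis
  then show ?thesis using that[of \<eta>] by (auto simp: dist_real_def dist_commute)
qed

lemma comp_cont: "continuous_on UNIV p \<Longrightarrow> continuous_on UNIV F \<Longrightarrow> continuous_on UNIV (F \<circ> p)"
  using continuous_on_compose continuous_on_subset by blast

lemma diag_lem: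
  fixes e :: "('a::metric_space \<times> 'a) \<Rightarrow> 'k::t2_space"
    and j :: "'a \<Rightarrow> 'l::t2_space"
  assumes beta: "stone_cech_offdiag e"
    and unif: "samuel_compactification j"
    and dbar_cont: "continuous_on UNIV dbar"
    and dbar_ext: "\<forall>z\<in>offdiag. dbar (e z) = ennreal (dist (fst z) (snd z))"
    and p1_cont: "continuous_on UNIV p1"
    and p1_ext: "\<forall>z\<in>offdiag. p1 (e z) = j (fst z)"
    and p2_cont: "continuous_on UNIV p2"
    and p2_ext: "\<forall>z\<in>offdiag. p2 (e z) = j (snd z)"
    and z: "dbar \<zeta> = 0"
  shows "p1 \<zeta> = p2 \<zeta>"
proof (rule ccontr)
  assume ne: "p1 \<zeta> \<noteq> p2 \<zeta>"
  have cl: "compact (UNIV :: 'l set)" using unif by (simp add: samuel_compactification_def)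
  obtain F :: "'l \<Rightarrow> real" where F: "continuous_on UNIV F" "F (p1 \<zeta>) = 1" "F (p2 \<zeta>) = 0"
    using ury2[OF cl ne] by blast
  obtain \<eta> where eta: "\<eta> > 0" "\<forall>x y. dist x y < \<eta> \<longrightarrow> \<bar>F (j x) - F (j y)\<bar> < 1/2"
    using unif_eta[OF unif F(1), of "1/2"] by auto
  define V where "V = dbar -` {..<ennreal \<eta>} \<inter> (F \<circ> p1) -` {3/4<..} \<inter> (F \<circ> p2) -` {..<1/4}"
  have "open V" unfolding V_def
    by (intro open_Int ov[OF dbar_cont] ov[OF comp_cont[OF p1_cont F(1)]] ov[OF comp_cont[OF p2_cont F(1)]]) auto
  moreover have "\<forall>z\<in>offdiag. e z \<notin> V"
  proof (intro ballI notI)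
    fix z assume zo: "z \<in> offdiag" and zV: "e z \<in> V"
    have e1: "dbar (e z) = ennreal (dist (fst z) (snd z))" using dbar_ext zo by blast
    have e2: "p1 (e z) = j (fst z)" using p1_ext zo by blast
    have e3: "p2 (e z) = j (snd z)" using p2_ext zo by blast
    have "ennreal (dist (fst z) (snd z)) < ennreal \<eta>" "F (j (fst z)) > 3/4" "F (j (snd z)) < 1/4"
      using zV unfolding V_def e1[symmetric] e2[symmetric] e3[symmetric] by auto
    then have "dist (fst z) (snd z) < \<eta>" by (simp add: ennreal_less_iff)
    then have "\<bar>F (j (fst z)) - F (j (snd z))\<bar> < 1/2" using eta(2) by blast
    then show False using \<open>F (j (fst z)) > 3/4\<close> \<open>F (j (snd z)) < 1/4\<close> by linarith
  qed
  ultimately have "V = {}" using dense_lem[OF beta] by blast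
  moreover have "\<zeta> \<in> V" unfolding V_def using z F(2,3) eta(1) by simp
  ultimately show False by auto
qed

lemma closed_compact_univ:
  fixes T :: "'k::topological_space set"
  assumes a: "compact (UNIV::'k set)" and b: "closed T"
  shows "compact T"
  using compact_Int_closed[OF a b] by simp

lemma dist_base_lip: "\<bar>max 0 (dist x b - n) - max 0 (dist y b - n)\<bar> \<le> dist x y"
proof -
  have "dist x b \<le> dist x y + dist y b" "dist y b \<le> dist x y + dist x b"
    using dist_triangle[of x b y] dist_triangle[of y b x] by (auto simp: dist_commute)
  then show ?thesis by (auto simp: max_def abs_if)
qed

lemma real_L1:
  fixes a b D n \<tau> :: real
  assumes "a \<ge> 0" "b \<ge> 0" "D > 0" "D \<le> a + b" "n \<ge> 0" "\<tau> > 0" "\<tau> < 1"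
    and big: "a + b > 2*n/\<tau>"
  shows "1 - \<tau> \<le> (max 0 (a - n) + max 0 (b - n)) / D"
proof -
  have "\<tau> * (a+b) > 2*n" using big \<open>\<tau>>0\<close> by (simp add: field_simps)
  then have "max 0 (a - n) + max 0 (b - n) \<ge> (1-\<tau>)*(a+b)" by (auto simp: max_def algebra_simps)
  moreover have "(1-\<tau>)*(a+b) \<ge> (1-\<tau>)*D" using assms by (intro mult_left_mono) auto
  ultimately show ?thesis using \<open>D>0\<close> by (simp add: field_simps)
qed

lemma part1:
  fixes e :: "('a::metric_space \<times> 'a) \<Rightarrow> 'k::t2_space"
    and j :: "'a \<Rightarrow> 'l::t2_space"
  assumes beta: "stone_cech_offdiag e"
    and p1_cont: "continuous_on UNIV p1"
    and p1_ext: "\<forall>z\<in>offdiag. p1 (e z) = j (fst z)"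
    and p2_cont: "continuous_on UNIV p2"
    and p2_ext: "\<forall>z\<in>offdiag. p2 (e z) = j (snd z)"
    and d0_cont: "continuous_on UNIV d0bar"
    and d0_ext: "\<forall>x. d0bar (j x) = ennreal (dist x base)"
    and mu: "radon_measure \<mu>"
    and nu: "radon_measure \<nu>"
    and prec: "meas_preceq e \<mu> \<nu>"
    and Z: "Z = UNIV - {z. d0bar (p1 z) < \<infinity> \<and> d0bar (p2 z) < \<infinity>}"
    and nuZ: "measure \<nu> Z = 0"
  shows "measure \<mu> Z = 0"
proof -
  define r1 where "r1 = d0bar \<circ> p1"
  define r2 where "r2 = d0bar \<circ> p2"
  have r1c: "continuous_on UNIV r1" unfolding r1_def by (rule comp_cont[OF p1_cont d0_cont])
  have r2c: "continuous_on UNIV r2" unfolding r2_def by (rule comp_cont[OF p2_cont d0_cont])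
  have r1e: "r1 (e z) = ennreal (dist (fst z) base)" if "z \<in> offdiag" for z
    using that p1_ext d0_ext by (simp add: r1_def)
  have r2e: "r2 (e z) = ennreal (dist (snd z) base)" if "z \<in> offdiag" for z
    using that p2_ext d0_ext by (simp add: r2_def)
  have Zeq: "Z = UNIV - (r1 -` {..<\<infinity>} \<inter> r2 -` {..<\<infinity>})"
    unfolding Z r1_def r2_def by auto
  have Zc: "closed Z" unfolding Zeq
    by (intro closed_Diff closed_UNIV open_Int ov[OF r1c] ov[OF r2c]) auto
  have cpt: "compact (UNIV :: 'k set)" using beta by (simp add: stone_cech_offdiag_def)
  have fm1: "finite_measure \<mu>" and fm2: "finite_measure \<nu>" and sb2: "sets \<nu> = sets borel"
    using mu nu by (auto simp: radon_measure_def)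
  have sp2: "space \<nu> = UNIV" using radon_space[OF nu] .
  have key: "measure \<mu> Z < \<epsilon>" if ep: "\<epsilon> > 0" for \<epsilon>
  proof -
    obtain U where U: "open U" "Z \<subseteq> U" "measure \<nu> U < \<epsilon>"
      using outer_lem[OF nu _ nuZ ep] Zc by (auto simp: borel_closed)
    define Kc where "Kc = UNIV - U"
    have Kcc: "compact Kc" unfolding Kc_def by (intro closed_compact_univ[OF cpt] closed_Diff closed_UNIV U(1))
    have KcR: "\<forall>\<zeta>\<in>Kc. r1 \<zeta> < \<infinity> \<and> r2 \<zeta> < \<infinity>" using U(2) unfolding Kc_def Zeq by auto
    obtain n :: nat where n: "\<forall>\<zeta>\<in>Kc. r1 \<zeta> < of_nat n \<and> r2 \<zeta> < of_nat n"
    proof (cases "Kc = {}")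
      case True then show ?thesis using that[of 0] by auto
    next
      case False
      obtain z1 where z1: "z1 \<in> Kc" "\<forall>y\<in>Kc. r1 y \<le> r1 z1"
        using continuous_attains_sup[OF Kcc False continuous_on_subset[OF r1c]] by auto
      obtain z2 where z2: "z2 \<in> Kc" "\<forall>y\<in>Kc. r2 y \<le> r2 z2"
        using continuous_attains_sup[OF Kcc False continuous_on_subset[OF r2c]] by auto
      have "r1 z1 < top" "r2 z2 < top" using KcR z1(1) z2(1) by auto
      then obtain n1 n2 where n1: "r1 z1 < of_nat n1" and n2: "r2 z2 < of_nat n2"
        using ennreal_Ex_less_of_nat by meson
      have "\<forall>\<zeta>\<in>Kc. r1 \<zeta> < of_nat (max n1 n2) \<and> r2 \<zeta> < of_nat (max n1 n2)"
      proof
        fix \<zeta> assume "\<zeta> \<in> Kc"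
        then have "r1 \<zeta> < of_nat n1" "r2 \<zeta> < of_nat n2" using z1 z2 n1 n2 by (auto intro: le_less_trans)
        moreover have "(of_nat n1::ennreal) \<le> of_nat (max n1 n2)" "(of_nat n2::ennreal) \<le> of_nat (max n1 n2)"
          by (auto simp: of_nat_le_iff)
        ultimately show "r1 \<zeta> < of_nat (max n1 n2) \<and> r2 \<zeta> < of_nat (max n1 n2)"
          by (auto intro: less_le_trans)
      qed
      then show ?thesis using that by blast
    qed
    define h where "h = (\<lambda>x. max 0 (dist x base - real n))"
    have hlip: "\<forall>x y. \<bar>h x - h y\<bar> \<le> dist x y" unfolding h_def using dist_base_lip by blast
    have hpos: "\<forall>x. h x \<ge> 0" unfolding h_def by auto
    obtain G where G: "G \<in> Gset e" "\<forall>z\<in>offdiag. G (e z) = gfun h z" "\<forall>\<zeta>. 0 \<le> G \<zeta> \<and> G \<zeta> \<le> 1"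
      using ext_lem[OF beta hlip hpos] by blast
    have Gc: "continuous_on UNIV G" using G(1) by (simp add: Gset_def)
    define Vn where "Vn = r1 -` {..<of_nat n} \<inter> r2 -` {..<of_nat n}"
    have Vno: "open Vn" unfolding Vn_def by (intro open_Int ov[OF r1c] ov[OF r2c]) auto
    have KcV: "Kc \<subseteq> Vn" using n unfolding Vn_def by auto
    have Ga: "G \<zeta> \<ge> 1" if "\<zeta> \<in> Z" for \<zeta>
    proof (rule ccontr)
      assume "\<not> G \<zeta> \<ge> 1"
      then have Gl: "G \<zeta> < 1" by simp
      define \<tau> where "\<tau> = (1 - G \<zeta>) / 2"
      have G0: "0 \<le> G \<zeta>" using G(3) by blast
      have tau: "\<tau> > 0" "\<tau> < 1" "G \<zeta> < 1 - \<tau>" using Gl G0 unfolding \<tau>_def by (auto simp: field_simps)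
      define R where "R = 2 * real n / \<tau> + 1"
      define V where "V = G -` {..<1-\<tau>} \<inter> (r1 -` {ennreal R<..} \<union> r2 -` {ennreal R<..})"
      have "open V" unfolding V_def
        by (intro open_Int open_Un ov[OF Gc] ov[OF r1c] ov[OF r2c]) auto
      moreover have "\<forall>z\<in>offdiag. e z \<notin> V"
      proof (intro ballI notI)
        fix z assume zo: "z \<in> offdiag" and zV: "e z \<in> V"
        obtain x y where xy: "z = (x,y)" by fastforce
        have ne: "x \<noteq> y" using zo xy by (simp add: offdiag_def)
        have g1: "gfun h (x,y) < 1 - \<tau>" using zV G(2) zo xy by (simp add: V_def)
        have "ennreal R < ennreal (dist x base) \<or> ennreal R < ennreal (dist y base)"
          using zV r1e[OF zo] r2e[OF zo] xy by (auto simp: V_def)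
        moreover have R0: "R > 0" using tau unfolding R_def
          by (metis add_pos_nonneg divide_nonneg_pos less_eq_real_def mult_nonneg_nonneg of_nat_0_le_iff zero_less_one zero_less_numeral add.commute)
        ultimately have big: "R < dist x base \<or> R < dist y base" by (auto simp: ennreal_less_iff)
        have "1 - \<tau> \<le> (h x + h y) / dist x y"
          unfolding h_def
        proof (rule real_L1)
          show "dist x y \<le> dist x base + dist y base" using dist_triangle3[of x y base] by (simp add: dist_commute)
          show "2 * real n / \<tau> < dist x base + dist y base"
            using big R_def zero_le_dist[of x base] zero_le_dist[of y base] by linarith
        qed (use tau ne in auto)
        then have "1 - \<tau> \<le> gfun h (x,y)" using tau by (simp add: gfun_def)
        then show False using g1 by simp
      qed
      ultimately have "V = {}" using dense_lem[OF beta] by blast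
      moreover have "\<zeta> \<in> V"
      proof -
        have "r1 \<zeta> = \<infinity> \<or> r2 \<zeta> = \<infinity>" using that unfolding Zeq by (auto simp: less_top[symmetric])
        then show ?thesis using tau(3) by (auto simp: V_def)
      qed
      ultimately show False by auto
    qed
    have Gb: "G \<zeta> = 0" if "\<zeta> \<in> Vn" for \<zeta>
    proof (rule ccontr)
      assume Gn: "G \<zeta> \<noteq> 0"
      define V where "V = G -` (- {0}) \<inter> Vn"
      have "open V" unfolding V_def
        by (intro open_Int Vno ov[OF Gc]) auto
      moreover have "\<forall>z\<in>offdiag. e z \<notin> V"
      proof (intro ballI notI)
        fix z assume zo: "z \<in> offdiag" and zV: "e z \<in> V"
        obtain x y where xy: "z = (x,y)" by fastforce
        have g1: "gfun h (x,y) \<noteq> 0" using zV G(2) zo xy by (simp add: V_def)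
        have "ennreal (dist x base) < ennreal (real n)" "ennreal (dist y base) < ennreal (real n)"
          using zV r1e[OF zo] r2e[OF zo] xy by (auto simp: V_def Vn_def ennreal_of_nat_eq_real_of_nat)
        then have "dist x base < real n" "dist y base < real n" by (auto simp: ennreal_less_iff)
        then have "h x = 0" "h y = 0" by (auto simp: h_def)
        then show False using g1 by (simp add: gfun_def)
      qed
      ultimately have "V = {}" using dense_lem[OF beta] by blast
      moreover have "\<zeta> \<in> V" using Gn that by (simp add: V_def)
      ultimately show False by auto
    qed
    have lo: "\<forall>\<zeta>. indicator Z \<zeta> \<le> G \<zeta>"
      using Ga G(3) by (auto split: split_indicator)
    have hi: "\<forall>\<zeta>. G \<zeta> \<le> indicator (UNIV - Vn) \<zeta> + 0"
      using Gb G(3) by (auto split: split_indicator)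
    have "measure \<mu> Z \<le> measure \<nu> (UNIV - Vn) + 0 * measure \<nu> UNIV"
      by (rule meas_bound[OF mu nu prec G(1) _ _ lo hi])
        (use Zc Vno in \<open>auto simp: borel_closed\<close>)
    also have "\<dots> \<le> measure \<nu> U"
      using finite_measure.finite_measure_mono[OF fm2, of "UNIV - Vn" U] KcV U(1) sb2
      unfolding Kc_def by (auto simp: borel_open)
    finally show ?thesis using U(3) by simp
  qed
  show ?thesis
  proof (rule ccontr)
    assume "measure \<mu> Z \<noteq> 0"
    then have "measure \<mu> Z > 0" using measure_nonneg[of \<mu> Z] by linarith
    then show False using key[of "measure \<mu> Z"] by simp
  qed
qed

lemma max_lip:
  fixes a b d t :: real
  assumes "\<bar>a - b\<bar> \<le> d"
  shows "\<bar>max 0 (t - a) - max 0 (t - b)\<bar> \<le> d"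
  using assms by (smt (verit))

lemma infdist_lt:
  assumes "A \<noteq> {}" "infdist x A < r"
  obtains a where "a \<in> A" "dist x a < r"
proof -
  have "Inf ((\<lambda>a. dist x a) ` A) < r" using assms by (simp add: infdist_notempty)
  then obtain v where "v \<in> (\<lambda>a. dist x a) ` A" "v < r" using cInf_lessD[of "(\<lambda>a. dist x a) ` A" r] assms(1) by blast
  then show ?thesis using that by blast
qed

lemma part2:
  fixes e :: "('a::metric_space \<times> 'a) \<Rightarrow> 'k::t2_space"
    and j :: "'a \<Rightarrow> 'l::t2_space"
  assumes beta: "stone_cech_offdiag e"
    and unif: "samuel_compactification j"
    and dbar_cont: "continuous_on UNIV dbar"
    and dbar_ext: "\<forall>z\<in>offdiag. dbar (e z) = ennreal (dist (fst z) (snd z))"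
    and p1_cont: "continuous_on UNIV p1"
    and p1_ext: "\<forall>z\<in>offdiag. p1 (e z) = j (fst z)"
    and p2_cont: "continuous_on UNIV p2"
    and p2_ext: "\<forall>z\<in>offdiag. p2 (e z) = j (snd z)"
    and mu: "radon_measure \<mu>"
    and nu: "radon_measure \<nu>"
    and prec: "meas_preceq e \<mu> \<nu>"
    and K: "compact K" "K \<subseteq> {z. dbar z = 0 \<and> p1 z \<in> A \<and> p2 z \<in> A}"
    and nuA: "\<forall>X \<in> sets borel. X \<subseteq> {z. dbar z = 0 \<and> p1 z \<in> A \<and> p2 z \<in> A} \<longrightarrow> measure \<nu> X = 0"
  shows "measure \<mu> K = 0"
proof (cases "K = {}")
  case True then show ?thesis by simp
next
  case Kne: False
  have cpt: "compact (UNIV :: 'k set)" using beta by (simp add: stone_cech_offdiag_def)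
  have cptl: "compact (UNIV :: 'l set)" using unif by (simp add: samuel_compactification_def)
  have fm1: "finite_measure \<mu>" and fm2: "finite_measure \<nu>" and sb2: "sets \<nu> = sets borel"
    using mu nu by (auto simp: radon_measure_def)
  define C where "C = p1 ` K \<union> p2 ` K"
  have Ccpt: "compact C" unfolding C_def
    by (intro compact_Un compact_continuous_image continuous_on_subset[OF p1_cont]
        continuous_on_subset[OF p2_cont] K(1)) auto
  have Ccl: "closed C" using Ccpt by (rule compact_imp_closed)
  define DC where "DC = dbar -` {0} \<inter> p1 -` C \<inter> p2 -` C"
  have DCcl: "closed DC" unfolding DC_def
    by (intro closed_Int cv[OF dbar_cont] cv[OF p1_cont] cv[OF p2_cont] Ccl) auto
  have DCsub: "DC \<subseteq> {z. dbar z = 0 \<and> p1 z \<in> A \<and> p2 z \<in> A}"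
    using K(2) unfolding DC_def C_def by auto
  have nuDC: "measure \<nu> DC = 0" using nuA DCcl DCsub by (auto simp: borel_closed)
  have diag: "p1 \<zeta> = p2 \<zeta>" if "dbar \<zeta> = 0" for \<zeta>
    by (rule diag_lem[OF beta unif dbar_cont dbar_ext p1_cont p1_ext p2_cont p2_ext that])
  define m where "m = measure \<nu> UNIV"
  have m0: "m \<ge> 0" by (simp add: m_def)
  have key: "measure \<mu> K < 2 * \<epsilon>" if ep: "\<epsilon> > 0" for \<epsilon>
  proof -
    obtain U where U: "open U" "DC \<subseteq> U" "measure \<nu> U < \<epsilon>"
      using outer_lem[OF nu _ nuDC ep] DCcl by (auto simp: borel_closed)
    define Q where "Q = dbar -` {0} \<inter> (UNIV - U)"
    have Qcl: "closed Q" unfolding Q_def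
      by (intro closed_Int cv[OF dbar_cont] closed_Diff closed_UNIV U(1)) auto
    define D where "D = p1 ` Q"
    have Dcpt: "compact D" unfolding D_def
      by (intro compact_continuous_image continuous_on_subset[OF p1_cont] closed_compact_univ[OF cpt Qcl]) auto
    have CD: "C \<inter> D = {}"
    proof (rule ccontr)
      assume "C \<inter> D \<noteq> {}"
      then obtain \<zeta> where z: "\<zeta> \<in> Q" "p1 \<zeta> \<in> C" unfolding D_def by auto
      have "dbar \<zeta> = 0" using z(1) by (simp add: Q_def)
      then have "\<zeta> \<in> DC" using z(2) diag[of \<zeta>] by (simp add: DC_def)
      then show False using z(1) U(2) by (auto simp: Q_def)
    qed
    obtain F :: "'l \<Rightarrow> real" where F: "continuous_on UNIV F" "\<forall>x\<in>C. F x = 1" "\<forall>x\<in>D. F x = 0"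
      "\<forall>x. 0 \<le> F x \<and> F x \<le> 1"
      using ury[OF cptl Ccl compact_imp_closed[OF Dcpt] CD] by blast
    have F1c: "continuous_on UNIV (F \<circ> p1)" by (rule comp_cont[OF p1_cont F(1)])
    have F2c: "continuous_on UNIV (F \<circ> p2)" by (rule comp_cont[OF p2_cont F(1)])
    define E where "E = (UNIV - U) \<inter> ((F \<circ> p1) -` {1/4..} \<union> (F \<circ> p2) -` {1/4..})"
    have Ecl: "closed E" unfolding E_def
      by (intro closed_Int closed_Un closed_Diff closed_UNIV U(1) cv[OF F1c] cv[OF F2c]) auto
    have Epos: "dbar \<zeta> \<noteq> 0" if "\<zeta> \<in> E" for \<zeta>
    proof
      assume d0: "dbar \<zeta> = 0"
      then have "\<zeta> \<in> Q" using that by (simp add: Q_def E_def)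
      then have "F (p1 \<zeta>) = 0" using F(3) by (auto simp: D_def)
      moreover have "p2 \<zeta> = p1 \<zeta>" using diag[OF d0] by simp
      ultimately show False using that by (simp add: E_def)
    qed
    obtain \<eta> :: real where eta: "\<eta> > 0" "\<forall>\<zeta>\<in>E. ennreal \<eta> < dbar \<zeta>"
    proof (cases "E = {}")
      case True then show ?thesis using that[of 1] by auto
    next
      case False
      obtain z0 where z0: "z0 \<in> E" "\<forall>y\<in>E. dbar z0 \<le> dbar y"
        using continuous_attains_inf[OF closed_compact_univ[OF cpt Ecl] False continuous_on_subset[OF dbar_cont]] by auto
      have "0 < dbar z0" using Epos[OF z0(1)] by (simp add: zero_less_iff_neq_zero)
      then obtain y where y: "0 < y" "y < dbar z0" using dense by blast
      have yt: "y \<noteq> top" using y(2) by auto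
      have "ennreal (enn2real y) = y" using yt by (simp add: ennreal_enn2real_if)
      moreover have "enn2real y > 0" using y(1) yt by (simp add: enn2real_positive_iff top.not_eq_extremum)
      ultimately show ?thesis using that[of "enn2real y"] y(2) z0(2) by (auto intro: less_le_trans)
    qed
    define B where "B = dbar -` {..ennreal \<eta>} \<inter> ((F \<circ> p1) -` {1/4..} \<union> (F \<circ> p2) -` {1/4..})"
    have Bcl: "closed B" unfolding B_def
      by (intro closed_Int closed_Un cv[OF dbar_cont] cv[OF F1c] cv[OF F2c]) auto
    have BU: "B \<subseteq> U"
    proof
      fix \<zeta> assume zB: "\<zeta> \<in> B"
      show "\<zeta> \<in> U"
      proof (rule ccontr)
        assume "\<zeta> \<notin> U"
        then have "\<zeta> \<in> E" using zB by (auto simp: E_def B_def)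
        then have "ennreal \<eta> < dbar \<zeta>" using eta(2) by blast
        then show False using zB by (auto simp: B_def)
      qed
    qed
    obtain \<eta>0 where eta0: "\<eta>0 > 0" "\<forall>x y. dist x y < \<eta>0 \<longrightarrow> \<bar>F (j x) - F (j y)\<bar> < 1/4"
      using unif_eta[OF unif F(1), of "1/4"] by auto
    define \<delta> where "\<delta> = min (\<eta>0/2) (\<epsilon> * \<eta> / (2 * (m + 1)))"
    have dpos: "\<delta> > 0" unfolding \<delta>_def using eta0(1) ep eta(1) m0 by auto
    have dle: "\<delta> < \<eta>0" unfolding \<delta>_def using eta0(1) by auto
    define c where "c = 2 * \<delta> / \<eta>"
    have c0: "c \<ge> 0" unfolding c_def using dpos eta(1) by auto
    have cm: "c * m \<le> \<epsilon>"
    proof -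
      have "c \<le> 2 * (\<epsilon> * \<eta> / (2 * (m + 1))) / \<eta>"
        unfolding c_def \<delta>_def using eta(1) by (intro divide_right_mono) auto
      also have "\<dots> = \<epsilon> / (m + 1)"
      proof -
        have "2 * (\<epsilon> * \<eta> / (2 * (m + 1))) = \<epsilon> * \<eta> / (m + 1)"
          by (metis mult_divide_mult_cancel_left_if zero_neq_numeral times_divide_eq_right)
        then show ?thesis using eta(1) by simp
      qed
      finally have "c * m \<le> \<epsilon> / (m + 1) * m" using m0 by (intro mult_right_mono) auto
      also have "\<dots> \<le> \<epsilon>" using m0 ep by (simp add: field_simps)
      finally show ?thesis .
    qed
    define S where "S = {x. F (j x) > 1/2}"
    have Sne: "S \<noteq> {}"
    proof -
      obtain \<zeta> where "\<zeta> \<in> K" using Kne by auto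
      then have "p1 \<zeta> \<in> C" by (simp add: C_def)
      then have "F (p1 \<zeta>) = 1" using F(2) by blast
      then have "p1 \<zeta> \<in> F -` {1/2<..}" by simp
      then have "F -` {1/2<..} \<noteq> {}" by blast
      moreover have "open (F -` {1/2<..})" by (intro ov[OF F(1)]) auto
      moreover have "closure (range j) = UNIV" using unif by (simp add: samuel_compactification_def)
      ultimately have "F -` {1/2<..} \<inter> range j \<noteq> {}"
        using open_Int_closure_eq_empty[of "F -` {1/2<..}" "range j"] by auto
      then show ?thesis by (auto simp: S_def)
    qed
    define h where "h = (\<lambda>x. max 0 (\<delta> - infdist x S))"
    have hlip: "\<forall>x y. \<bar>h x - h y\<bar> \<le> dist x y"
    proof (intro allI)
      fix x y
      have "\<bar>infdist x S - infdist y S\<bar> \<le> dist x y" by (rule infdist_triangle_abs)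
      then show "\<bar>h x - h y\<bar> \<le> dist x y" unfolding h_def by (rule max_lip)
    qed
    have hpos: "\<forall>x. h x \<ge> 0" unfolding h_def by auto
    have h2: "h x = \<delta>" if "F (j x) > 1/2" for x
      using that dpos by (simp add: h_def S_def)
    have h3: "F (j x) > 1/4" if "h x > 0" for x
    proof -
      have "infdist x S < \<delta>" using that by (simp add: h_def)
      then obtain s where s: "s \<in> S" "dist x s < \<delta>" using infdist_lt[OF Sne] by blast
      then have "\<bar>F (j x) - F (j s)\<bar> < 1/4" using eta0(2) dle by auto
      moreover have "F (j s) > 1/2" using s(1) by (simp add: S_def)
      ultimately show ?thesis by linarith
    qed
    obtain G where G: "G \<in> Gset e" "\<forall>z\<in>offdiag. G (e z) = gfun h z" "\<forall>\<zeta>. 0 \<le> G \<zeta> \<and> G \<zeta> \<le> 1"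
      using ext_lem[OF beta hlip hpos] by blast
    have Gc: "continuous_on UNIV G" using G(1) by (simp add: Gset_def)
    have Gz: "G (e (x,y)) = gfun h (x,y)" "x \<noteq> y" if "(x,y) \<in> offdiag" for x y
      using G(2) that by (auto simp: offdiag_def)
    have G2: "G \<zeta> \<ge> 1" if "\<zeta> \<in> K" for \<zeta>
    proof (rule ccontr)
      assume "\<not> G \<zeta> \<ge> 1"
      define V where "V = G -` {..<1} \<inter> (F \<circ> p1) -` {1/2<..} \<inter> dbar -` {..<ennreal \<delta>}"
      have "open V" unfolding V_def
        by (intro open_Int ov[OF Gc] ov[OF F1c] ov[OF dbar_cont]) auto
      moreover have "\<forall>z\<in>offdiag. e z \<notin> V"
      proof (intro ballI notI)
        fix z assume zo: "z \<in> offdiag" and zV: "e z \<in> V"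
        obtain x y where xy: "z = (x,y)" by fastforce
        have ne: "x \<noteq> y" and g: "G (e z) = gfun h (x,y)" using Gz zo xy by auto
        have "F (j x) > 1/2" using zV p1_ext zo xy by (auto simp: V_def)
        then have hx: "h x = \<delta>" by (rule h2)
        have "ennreal (dist x y) < ennreal \<delta>" using zV dbar_ext zo xy by (auto simp: V_def)
        then have dl: "dist x y < \<delta>" using dpos by (simp add: ennreal_less_iff)
        have "dist x y \<le> h x + h y" using hx hpos[rule_format, of y] dl by linarith
        then have "1 \<le> (h x + h y) / dist x y" using ne by (simp add: field_simps)
        then have "gfun h (x,y) = 1" by (simp add: gfun_def)
        then show False using zV g by (simp add: V_def)
      qed
      ultimately have "V = {}" using dense_lem[OF beta] by blast
      moreover have "\<zeta> \<in> V"
      proof -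
        have "p1 \<zeta> \<in> C" using that by (simp add: C_def)
        then have "F (p1 \<zeta>) = 1" using F(2) by blast
        moreover have "dbar \<zeta> = 0" using that K(2) by auto
        ultimately show ?thesis using \<open>\<not> G \<zeta> \<ge> 1\<close> dpos by (simp add: V_def)
      qed
      ultimately show False by auto
    qed
    have G3: "G \<zeta> \<le> c" if "ennreal \<eta> < dbar \<zeta>" for \<zeta>
    proof (rule ccontr)
      assume "\<not> G \<zeta> \<le> c"
      define V where "V = G -` {c<..} \<inter> dbar -` {ennreal \<eta><..}"
      have "open V" unfolding V_def
        by (intro open_Int ov[OF Gc] ov[OF dbar_cont]) auto
      moreover have "\<forall>z\<in>offdiag. e z \<notin> V"
      proof (intro ballI notI)
        fix z assume zo: "z \<in> offdiag" and zV: "e z \<in> V"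
        obtain x y where xy: "z = (x,y)" by fastforce
        have ne: "x \<noteq> y" and g: "G (e z) = gfun h (x,y)" using Gz zo xy by auto
        have "ennreal \<eta> < ennreal (dist x y)" using zV dbar_ext zo xy by (auto simp: V_def)
        then have dl: "\<eta> < dist x y" using eta(1) by (simp add: ennreal_less_iff)
        have hb: "h x \<le> \<delta>" "h y \<le> \<delta>" by (auto simp: h_def infdist_nonneg dpos less_imp_le)
        have "gfun h (x,y) \<le> (h x + h y) / dist x y" by (simp add: gfun_def)
        also have "\<dots> \<le> 2 * \<delta> / dist x y" using hb dl eta(1) by (intro divide_right_mono) auto
        also have "\<dots> \<le> 2 * \<delta> / \<eta>" proof -
          have "0 < dist x y * \<eta>" using dl eta(1) by (metis mult_pos_pos order.strict_trans)
          then show ?thesis using dl eta(1) dpos by (intro divide_left_mono) auto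
        qed
        finally have "gfun h (x,y) \<le> c" by (simp add: c_def)
        then show False using zV g by (simp add: V_def)
      qed
      ultimately have "V = {}" using dense_lem[OF beta] by blast
      moreover have "\<zeta> \<in> V" using that \<open>\<not> G \<zeta> \<le> c\<close> by (simp add: V_def)
      ultimately show False by auto
    qed
    have G4: "G \<zeta> = 0" if "F (p1 \<zeta>) < 1/4" "F (p2 \<zeta>) < 1/4" for \<zeta>
    proof (rule ccontr)
      assume "G \<zeta> \<noteq> 0"
      define V where "V = G -` (- {0}) \<inter> (F \<circ> p1) -` {..<1/4} \<inter> (F \<circ> p2) -` {..<1/4}"
      have "open V" unfolding V_def
        by (intro open_Int ov[OF Gc] ov[OF F1c] ov[OF F2c]) auto
      moreover have "\<forall>z\<in>offdiag. e z \<notin> V"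
      proof (intro ballI notI)
        fix z assume zo: "z \<in> offdiag" and zV: "e z \<in> V"
        obtain x y where xy: "z = (x,y)" by fastforce
        have ne: "x \<noteq> y" and g: "G (e z) = gfun h (x,y)" using Gz zo xy by auto
        have "F (j x) < 1/4" "F (j y) < 1/4" using zV p1_ext p2_ext zo xy by (auto simp: V_def)
        then have "\<not> h x > 0" "\<not> h y > 0" using h3 by force+
        then have "h x = 0" "h y = 0" using hpos by (auto simp: le_less)
        then have "gfun h (x,y) = 0" by (simp add: gfun_def)
        then show False using zV g by (simp add: V_def)
      qed
      ultimately have "V = {}" using dense_lem[OF beta] by blast
      moreover have "\<zeta> \<in> V" using that \<open>G \<zeta> \<noteq> 0\<close> by (simp add: V_def)
      ultimately show False by auto
    qed
    have lo: "\<forall>\<zeta>. indicator K \<zeta> \<le> G \<zeta>"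
      using G2 G(3) by (auto split: split_indicator)
    have hi: "\<forall>\<zeta>. G \<zeta> \<le> indicator B \<zeta> + c"
    proof
      fix \<zeta>
      show "G \<zeta> \<le> indicator B \<zeta> + c"
      proof (cases "\<zeta> \<in> B")
        case True then show ?thesis using G(3) c0 by (auto simp: indicator_def intro: order_trans)
      next
        case False
        then have "ennreal \<eta> < dbar \<zeta> \<or> (F (p1 \<zeta>) < 1/4 \<and> F (p2 \<zeta>) < 1/4)"
          by (auto simp: B_def not_le)
        then have "G \<zeta> \<le> c" using G3 G4 c0 by auto
        then show ?thesis using False by simp
      qed
    qed
    have "measure \<mu> K \<le> measure \<nu> B + c * measure \<nu> UNIV"
      by (rule meas_bound[OF mu nu prec G(1) _ _ lo hi])
        (use K(1) Bcl in \<open>auto simp: borel_closed compact_imp_closed\<close>)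
    also have "measure \<nu> B \<le> measure \<nu> U"
      using finite_measure.finite_measure_mono[OF fm2 BU] U(1) sb2 by (auto simp: borel_open)
    finally show ?thesis using U(3) cm unfolding m_def by linarith
  qed
  show ?thesis
  proof (rule ccontr)
    assume "measure \<mu> K \<noteq> 0"
    then have "measure \<mu> K > 0" using measure_nonneg[of \<mu> K] by linarith
    then show False using key[of "measure \<mu> K / 2"] by simp
  qed
qed

theorem proposition3p32:
  fixes e :: "('a::metric_space \<times> 'a) \<Rightarrow> 'k::t2_space"
    and j :: "'a \<Rightarrow> 'l::t2_space"
    and dbar :: "'k \<Rightarrow> ennreal"
    and p1 p2 :: "'k \<Rightarrow> 'l"
    and d0bar :: "'l \<Rightarrow> ennreal"
    and base :: 'a
    and A :: "'l set"
    and \<mu> \<nu> :: "'k measure"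
  assumes complete: "complete (UNIV :: 'a set)"
    and three: "\<exists>x y z :: 'a. x \<noteq> y \<and> y \<noteq> z \<and> x \<noteq> z"
    and beta: "stone_cech_offdiag e"
    and unif: "samuel_compactification j"
    and dbar_cont: "continuous_on UNIV dbar"
    and dbar_ext: "\<forall>z\<in>offdiag. dbar (e z) = ennreal (dist (fst z) (snd z))"
    and p1_cont: "continuous_on UNIV p1"
    and p1_ext: "\<forall>z\<in>offdiag. p1 (e z) = j (fst z)"
    and p2_cont: "continuous_on UNIV p2"
    and p2_ext: "\<forall>z\<in>offdiag. p2 (e z) = j (snd z)"
    and d0_cont: "continuous_on UNIV d0bar"
    and d0_ext: "\<forall>x. d0bar (j x) = ennreal (dist x base)"
    and A_borel: "A \<in> sets (restrict_space borel {\<xi>. d0bar \<xi> < \<infinity>})"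
    and A_sub: "A \<subseteq> {\<xi>. d0bar \<xi> < \<infinity>}"
    and mu: "radon_measure \<mu>"
    and nu: "radon_measure \<nu>"
    and prec: "meas_preceq e \<mu> \<nu>"
    and conc: "concentrated_on \<nu>
      ({z. d0bar (p1 z) < \<infinity> \<and> d0bar (p2 z) < \<infinity>}
        - {z. dbar z = 0 \<and> p1 z \<in> A \<and> p2 z \<in> A})"
  shows "concentrated_on \<mu>
      ({z. d0bar (p1 z) < \<infinity> \<and> d0bar (p2 z) < \<infinity>}
        - {z. dbar z = 0 \<and> p1 z \<in> A \<and> p2 z \<in> A})"
proof -
  define Rset where "Rset = {z. d0bar (p1 z) < \<infinity> \<and> d0bar (p2 z) < \<infinity>}"
  define DA where "DA = {z. dbar z = 0 \<and> p1 z \<in> A \<and> p2 z \<in> A}"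
  have fm1: "finite_measure \<mu>" and sb1: "sets \<mu> = sets borel"
    and reg1: "\<forall>B \<in> sets borel. emeasure \<mu> B = (SUP C \<in> {C. compact C \<and> C \<subseteq> B}. emeasure \<mu> C)"
    using mu by (auto simp: radon_measure_def)
  have fm2: "finite_measure \<nu>" and sb2: "sets \<nu> = sets borel" using nu by (auto simp: radon_measure_def)
  have sp1: "space \<mu> = UNIV" using radon_space[OF mu] .
  have sp2: "space \<nu> = UNIV" using radon_space[OF nu] .
  obtain N0 where N0: "N0 \<in> sets \<nu>" "emeasure \<nu> N0 = 0" "space \<nu> - (Rset - DA) \<subseteq> N0"
    using conc unfolding concentrated_on_def Rset_def DA_def by blast
  have mN0: "measure \<nu> N0 = 0" using N0(2) by (simp add: measure_def)
  have nu_zero: "measure \<nu> X = 0" if "X \<in> sets borel" "X \<subseteq> UNIV - (Rset - DA)" for X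
  proof -
    have "measure \<nu> X \<le> measure \<nu> N0"
      using finite_measure.finite_measure_mono[OF fm2, of X N0] that N0 sp2 by auto
    then show ?thesis using mN0 measure_nonneg[of \<nu> X] by linarith
  qed
  have r1c: "continuous_on UNIV (d0bar \<circ> p1)" by (rule comp_cont[OF p1_cont d0_cont])
  have r2c: "continuous_on UNIV (d0bar \<circ> p2)" by (rule comp_cont[OF p2_cont d0_cont])
  have Rseq: "Rset = (d0bar \<circ> p1) -` {..<\<infinity>} \<inter> (d0bar \<circ> p2) -` {..<\<infinity>}"
    unfolding Rset_def by auto
  have Ro: "open Rset" unfolding Rseq by (intro open_Int ov[OF r1c] ov[OF r2c]) auto
  have Zb: "UNIV - Rset \<in> sets borel" using Ro by (auto simp: borel_closed)
  have muZ: "measure \<mu> (UNIV - Rset) = 0"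
    by (rule part1[OF beta p1_cont p1_ext p2_cont p2_ext d0_cont d0_ext mu nu prec])
      (use nu_zero[OF Zb] Rset_def in auto)
  have R0o: "open {\<xi>. d0bar \<xi> < \<infinity>}"
    using ov[OF d0_cont, of "{..<\<infinity>}"] by (simp add: vimage_def)
  have Ab: "A \<in> sets borel"
    using A_borel sets_restrict_space_iff[of "{\<xi>. d0bar \<xi> < \<infinity>}" borel A] R0o
    by (auto simp: borel_open)
  have p1m: "p1 \<in> borel_measurable borel" by (rule borel_measurable_continuous_onI[OF p1_cont])
  have p2m: "p2 \<in> borel_measurable borel" by (rule borel_measurable_continuous_onI[OF p2_cont])
  have DAeq: "DA = dbar -` {0} \<inter> (p1 -` A \<inter> space borel) \<inter> (p2 -` A \<inter> space borel)"
    unfolding DA_def by auto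
  have DAb: "DA \<in> sets borel" unfolding DAeq
    by (intro sets.Int measurable_sets[OF p1m Ab] measurable_sets[OF p2m Ab] borel_closed cv[OF dbar_cont]) auto
  have muK: "measure \<mu> K = 0" if "compact K" "K \<subseteq> DA" for K
  proof (rule part2[OF beta unif dbar_cont dbar_ext p1_cont p1_ext p2_cont p2_ext mu nu prec that(1)])
    show "K \<subseteq> {z. dbar z = 0 \<and> p1 z \<in> A \<and> p2 z \<in> A}" using that(2) by (simp add: DA_def)
    show "\<forall>X\<in>sets borel. X \<subseteq> {z. dbar z = 0 \<and> p1 z \<in> A \<and> p2 z \<in> A} \<longrightarrow> measure \<nu> X = 0"
      using nu_zero unfolding DA_def by auto
  qed
  have "emeasure \<mu> DA = (SUP C \<in> {C. compact C \<and> C \<subseteq> DA}. emeasure \<mu> C)" using reg1 DAb by blast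
  also have "\<dots> = 0"
  proof (rule antisym)
    show "(SUP C \<in> {C. compact C \<and> C \<subseteq> DA}. emeasure \<mu> C) \<le> 0"
    proof (rule SUP_least)
      fix C assume "C \<in> {C. compact C \<and> C \<subseteq> DA}"
      then have "measure \<mu> C = 0" using muK by blast
      then show "emeasure \<mu> C \<le> 0" using finite_measure.emeasure_eq_measure[OF fm1, of C] by simp
    qed
  qed simp
  finally have eDA: "emeasure \<mu> DA = 0" .
  have eZ: "emeasure \<mu> (UNIV - Rset) = 0"
    using muZ finite_measure.emeasure_eq_measure[OF fm1, of "UNIV - Rset"] by simp
  define N where "N = (UNIV - Rset) \<union> DA"
  have Ns: "N \<in> sets \<mu>" unfolding N_def using Zb DAb sb1 by auto
  have "emeasure \<mu> N \<le> emeasure \<mu> (UNIV - Rset) + emeasure \<mu> DA"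
    unfolding N_def by (rule emeasure_subadditive) (use Zb DAb sb1 in auto)
  then have eN: "emeasure \<mu> N = 0" using eZ eDA by simp
  have "space \<mu> - (Rset - DA) \<subseteq> N" unfolding N_def sp1 by auto
  then show ?thesis unfolding concentrated_on_def Rset_def[symmetric] DA_def[symmetric]
    using Ns eN by blast
qed

end
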